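(* Let $(B,+,\circ)$ be a left brace with Yang–Baxter map $r$, let $X\subseteq B$ be such that $(X,r)$ is a solution of the set-theoretic Yang–Baxter equation, and let $c\in B$ be central in $(B,\circ)$. (1) If $k_1(x)=c\circ x-c$ satisfies $k_1(X)\subseteq X$ and $c^2=c\circ c\in\mathrm{Soc}(B)$, then $k_1:X\to X$ is a reflection of $(X,r)$ with $k_1\circ k_1=\mathrm{id}_X$; in particular this holds if $c\circ c=0$. (2) If $2\,(c\circ x)=2c+2x$ for all $x\in X$, $c\circ c=0$, and $k_2(x)=c\circ x+c$ satisfies $k_2(X)\subseteq X$, then $k_2:X\to X$ is a reflection of $(X,r)$ with $k_2\circ k_2=\mathrm{id}_X$.
   Context: A (left) brace is a triple $(B,+,\circ)$ such that $(B,+)$ is an abelian group with identity $0$ (which is also the identity of $(B,\circ)$), $(B,\circ)$ is a group, and $x\circ(y+z)=x\circ y+x\circ z-x$ for all $x,y,z\in B$. The Yang–Baxter map is $r(x,y)=(\sigma_x(y),\tau_y(x))$ with $\sigma_x(y)=x\circ y-x$ and $\tau_y(x)=(\sigma_x(y))^{-1}\circ x-(\sigma_x(y))^{-1}$. For $X\subseteq B$, $(X,r)$ is a solution of the set-theoretic Yang–Baxter equation if $r(X\times X)\subseteq X\times X$ and $(\mathrm{id}\times r)(r\times\mathrm{id})(\mathrm{id}\times r)=(r\times\mathrm{id})(\mathrm{id}\times r)(r\times\mathrm{id})$ on $X^3$. A map $k:X\to X$ is a reflection of $(X,r)$ if $r(\mathrm{id}\times k)r(\mathrm{id}\times k)=(\mathrm{id}\times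 k)r(\mathrm{id}\times k)r$ on $X\times X$. $\mathrm{Soc}(B)=\{a\in B: a\circ b=a+b\ \forall b\in B\}$. *)

theory Defs
  imports Main
begin

text \<open>A left brace on the whole type 'a: the additive group is the type-class
  abelian group (+, 0, -), and m is the circle operation.\<close>

definition left_brace :: "('a::ab_group_add \<Rightarrow> 'a \<Rightarrow> 'a) \<Rightarrow> bool" where
  "left_brace m \<longleftrightarrow>
     (\<forall>x y z. m (m x y) z = m x (m y z)) \<and>
     (\<forall>x. m 0 x = x \<and> m x 0 = x) \<and>
     (\<forall>x. \<exists>y. m x y = 0 \<and> m y x = 0) \<and>
     (\<forall>x y z. m x (y + z) = m x y + m x z - x)"

definition circ_inv :: "('a::ab_group_add \<Rightarrow> 'a \<Rightarrow> 'a) \<Rightarrow> 'a \<Rightarrow> 'a" where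
  "circ_inv m x = (SOME y. m x y = 0 \<and> m y x = 0)"

definition brace_sigma :: "('a::ab_group_add \<Rightarrow> 'a \<Rightarrow> 'a) \<Rightarrow> 'a \<Rightarrow> 'a \<Rightarrow> 'a" where
  "brace_sigma m x y = m x y - x"

definition brace_tau :: "('a::ab_group_add \<Rightarrow> 'a \<Rightarrow> 'a) \<Rightarrow> 'a \<Rightarrow> 'a \<Rightarrow> 'a" where
  "brace_tau m y x =
     m (circ_inv m (brace_sigma m x y)) x - circ_inv m (brace_sigma m x y)"

definition yb_map :: "('a::ab_group_add \<Rightarrow> 'a \<Rightarrow> 'a) \<Rightarrow> 'a \<times> 'a \<Rightarrow> 'a \<times> 'a" where
  "yb_map m p = (brace_sigma m (fst p) (snd p), brace_tau m (snd p) (fst p))"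

definition r12 :: "('a \<times> 'a \<Rightarrow> 'a \<times> 'a) \<Rightarrow> 'a \<times> 'a \<times> 'a \<Rightarrow> 'a \<times> 'a \<times> 'a" where
  "r12 r t = (case t of (x, y, z) \<Rightarrow> (fst (r (x, y)), snd (r (x, y)), z))"

definition r23 :: "('a \<times> 'a \<Rightarrow> 'a \<times> 'a) \<Rightarrow> 'a \<times> 'a \<times> 'a \<Rightarrow> 'a \<times> 'a \<times> 'a" where
  "r23 r t = (case t of (x, y, z) \<Rightarrow> (x, fst (r (y, z)), snd (r (y, z))))"

definition ybe_solution :: "'a set \<Rightarrow> ('a \<times> 'a \<Rightarrow> 'a \<times> 'a) \<Rightarrow> bool" where
  "ybe_solution X r \<longleftrightarrow>
     (\<forall>x\<in>X. \<forall>y\<in>X. r (x, y) \<in> X \<times> X) \<and>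
     (\<forall>x\<in>X. \<forall>y\<in>X. \<forall>z\<in>X.
        r23 r (r12 r (r23 r (x, y, z))) = r12 r (r23 r (r12 r (x, y, z))))"

definition id_times :: "('a \<Rightarrow> 'a) \<Rightarrow> 'a \<times> 'a \<Rightarrow> 'a \<times> 'a" where
  "id_times k p = (fst p, k (snd p))"

definition is_reflection :: "'a set \<Rightarrow> ('a \<times> 'a \<Rightarrow> 'a \<times> 'a) \<Rightarrow> ('a \<Rightarrow> 'a) \<Rightarrow> bool" where
  "is_reflection X r k \<longleftrightarrow>
     (\<forall>x\<in>X. \<forall>y\<in>X.
        r (id_times k (r (id_times k (x, y)))) = id_times k (r (id_times k (r (x, y)))))"

definition brace_soc :: "('a::ab_group_add \<Rightarrow> 'a \<Rightarrow> 'a) \<Rightarrow> 'a set" where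
  "brace_soc m = {a. \<forall>b. m a b = a + b}"

end

theory Submission
  imports Defs
begin

locale lb =
  fixes m :: "'a::ab_group_add \<Rightarrow> 'a \<Rightarrow> 'a"
  assumes brace: "left_brace m"
begin

lemma assoc: "m (m x y) z = m x (m y z)" using brace by (simp add: left_brace_def)
lemma unit0 [simp]: "m 0 x = x" "m x 0 = x" using brace by (simp_all add: left_brace_def)
lemma distr: "m x (y + z) = m x y + m x z - x" using brace by (simp add: left_brace_def)

lemma inv: "m x (circ_inv m x) = 0 \<and> m (circ_inv m x) x = 0"
proof -
  have "\<exists>y. m x y = 0 \<and> m y x = 0" using brace by (simp add: left_brace_def)
  then show ?thesis unfolding circ_inv_def by (rule someI_ex)
qed

definition lam where "lam a x = m a x - a"

lemma sig: "brace_sigma m a x = lam a x" by (simp add: brace_sigma_def lam_def)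

lemma m_lam: "m a x = a + lam a x" by (simp add: lam_def)

lemma lam_add: "lam a (x + y) = lam a x + lam a y"
  by (simp add: lam_def distr algebra_simps)

lemma lam_diff: "m a (y - z) = m a y - m a z + a"
proof -
  have "m a ((y - z) + z) = m a (y - z) + m a z - a" by (rule distr)
  then show ?thesis by (simp add: algebra_simps)
qed

lemma lam_comp: "lam (m a b) x = lam a (lam b x)"
  by (simp add: lam_def lam_diff assoc)

lemma lam0 [simp]: "lam 0 x = x" by (simp add: lam_def)

lemma lam_inv: "lam (circ_inv m a) (lam a x) = x"
  by (metis lam_comp inv lam0)

lemma lam_inv2: "lam a (lam (circ_inv m a) x) = x"
  by (metis lam_comp inv lam0)

lemma yb: "yb_map m (x, y) = (lam x y, lam (circ_inv m (lam x y)) x)"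
  by (simp add: yb_map_def brace_tau_def sig lam_def)

end

theorem mainTheorem11:
  fixes m :: "'a::ab_group_add \<Rightarrow> 'a \<Rightarrow> 'a" and X :: "'a set" and c :: 'a
  assumes brace: "left_brace m"
    and sol: "ybe_solution X (yb_map m)"
    and central: "\<forall>x. m c x = m x c"
  shows
    "((\<lambda>x. m c x - c) ` X \<subseteq> X \<and> m c c \<in> brace_soc m \<longrightarrow>
        is_reflection X (yb_map m) (\<lambda>x. m c x - c) \<and>
        (\<forall>x\<in>X. m c (m c x - c) - c = x)) \<and>
     ((\<lambda>x. m c x - c) ` X \<subseteq> X \<and> m c c = 0 \<longrightarrow>
        is_reflection X (yb_map m) (\<lambda>x. m c x - c) \<and>
        (\<forall>x\<in>X. m c (m c x - c) - c = x)) \<and>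
     ((\<forall>x\<in>X. m c x + m c x = c + c + x + x) \<and> m c c = 0 \<and>
      (\<lambda>x. m c x + c) ` X \<subseteq> X \<longrightarrow>
        is_reflection X (yb_map m) (\<lambda>x. m c x + c) \<and>
        (\<forall>x\<in>X. m c (m c x + c) + c = x))"
proof -
  interpret lb m by (rule lb.intro) (rule brace)
  let ?i = "circ_inv m"
  have kl: "(\<lambda>x. m c x - c) = lam c" by (rule ext) (simp add: lam_def)
  have conj: "lam a (lam c (lam (?i a) x)) = lam c x" for a x
  proof -
    have "m (m a c) (?i a) = c"
      by (metis assoc central inv unit0(2))
    then show ?thesis by (metis lam_comp)
  qed
  have comm: "lam c (lam a x) = lam a (lam c x)" for a x
    by (metis lam_comp central)
  have refl1: "is_reflection X (yb_map m) (lam c)"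
    unfolding is_reflection_def
  proof (intro ballI)
    fix x y
    define a where "a = lam x (lam c y)"
    define p where "p = lam a (lam c (lam (?i a) x))"
    define u where "u = lam x y"
    define p' where "p' = lam u (lam c (lam (?i u) x))"
    have pp: "p = lam c x" "p' = lam c x" unfolding p_def p'_def by (rule conj)+
    have "yb_map m (id_times (lam c) (yb_map m (id_times (lam c) (x, y))))
        = (p, lam (?i p) a)"
      by (simp add: id_times_def yb a_def p_def)
    moreover have "id_times (lam c) (yb_map m (id_times (lam c) (yb_map m (x, y))))
        = (p', lam c (lam (?i p') u))"
      by (simp add: id_times_def yb u_def p'_def)
    moreover have "lam (?i p) a = lam c (lam (?i p') u)"
      unfolding a_def u_def pp by (metis comm)
    ultimately show "yb_map m (id_times (lam c) (yb_map m (id_times (lam c) (x, y)))) =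
      id_times (lam c) (yb_map m (id_times (lam c) (yb_map m (x, y))))"
      using pp by simp
  qed
  have P1: "m c c \<in> brace_soc m \<longrightarrow> (\<forall>x. lam c (lam c x) = x)"
  proof (intro impI allI)
    fix x assume "m c c \<in> brace_soc m"
    then have "m (m c c) x = m c c + x" by (simp add: brace_soc_def)
    then show "lam c (lam c x) = x" by (metis lam_comp lam_def add_diff_cancel_left')
  qed
  have soc0: "m c c = 0 \<Longrightarrow> m c c \<in> brace_soc m" by (simp add: brace_soc_def)
  have part3: "(\<forall>x\<in>X. m c x + m c x = c + c + x + x) \<and> m c c = 0 \<and>
      (\<lambda>x. m c x + c) ` X \<subseteq> X \<longrightarrow>
        is_reflection X (yb_map m) (\<lambda>x. m c x + c) \<and>
        (\<forall>x\<in>X. m c (m c x + c) + c = x)"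
  proof (intro impI)
    assume H: "(\<forall>x\<in>X. m c x + m c x = c + c + x + x) \<and> m c c = 0 \<and>
      (\<lambda>x. m c x + c) ` X \<subseteq> X"
    define d where "d = c + c"
    have kk: "(\<lambda>x. m c x + c) = (\<lambda>x. lam c x + d)" by (rule ext) (simp add: lam_def d_def)
    have cc: "m c c = 0" using H by simp
    have lcd: "lam c d = - d"
    proof -
      have "lam c d = lam c c + lam c c" unfolding d_def by (rule lam_add)
      then show ?thesis using cc by (simp add: lam_def d_def)
    qed
    have inv3: "\<forall>x\<in>X. m c (m c x + c) + c = x"
    proof
      fix x
      have "lam c (lam c x) = x" using P1 soc0 cc by blast
      then show "m c (m c x + c) + c = x"
        using lcd by (simp add: m_lam lam_add d_def algebra_simps)
    qed
    have lzd: "lam z d = d" if "z \<in> X" for z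
    proof -
      have "m c z + m c z = c + c + z + z" using H that by blast
      moreover have "lam z d = lam z c + lam z c" unfolding d_def by (rule lam_add)
      moreover have "m z c = m c z" using central by metis
      ultimately show ?thesis by (simp add: d_def lam_def algebra_simps)
    qed
    have lizd: "lam (?i z) d = d" if "z \<in> X" for z
    proof -
      have "lam (?i z) d = lam (?i z) (lam z d)" using lzd[OF that] by simp
      then show ?thesis by (simp add: lam_inv)
    qed
    have clos: "x \<in> X \<Longrightarrow> y \<in> X \<Longrightarrow> fst (yb_map m (x,y)) \<in> X \<and> snd (yb_map m (x,y)) \<in> X"
      for x y
    proof -
      assume "x \<in> X" "y \<in> X"
      moreover have "\<forall>x\<in>X. \<forall>y\<in>X. yb_map m (x, y) \<in> X \<times> X"
        using sol unfolding ybe_solution_def by (rule conjunct1)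
      ultimately have "yb_map m (x, y) \<in> X \<times> X" by blast
      then show ?thesis by (simp add: mem_Times_iff)
    qed
    have kX: "x \<in> X \<Longrightarrow> lam c x + d \<in> X" for x
    proof -
      assume "x \<in> X"
      then have "m c x + c \<in> X" using H by blast
      then show ?thesis by (simp add: lam_def d_def algebra_simps)
    qed
    have refl3: "is_reflection X (yb_map m) (\<lambda>x. lam c x + d)"
      unfolding is_reflection_def
    proof (intro ballI)
      fix x y assume xX: "x \<in> X" and yX: "y \<in> X"
      define a where "a = lam x (lam c y + d)"
      define b where "b = lam (?i a) x"
      define p where "p = lam a (lam c b + d)"
      define u where "u = lam x y"
      define v where "v = lam (?i u) x"
      define p' where "p' = lam u (lam c v + d)"
      have aX: "a \<in> X" and bX: "b \<in> X" using clos[OF xX kX[OF yX]] by (simp_all add: yb a_def b_def)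
      have uX: "u \<in> X" and vX: "v \<in> X" using clos[OF xX yX] by (simp_all add: yb u_def v_def)
      have pX: "p \<in> X" using clos[OF aX kX[OF bX]] by (simp add: yb p_def)
      have pp: "p = lam c x + d"
        unfolding p_def b_def lam_add conj lzd[OF aX] ..
      have pp': "p' = lam c x + d"
        unfolding p'_def v_def lam_add conj lzd[OF uX] ..
      have "yb_map m (id_times (\<lambda>x. lam c x + d) (yb_map m (id_times (\<lambda>x. lam c x + d) (x, y))))
          = (p, lam (?i p) a)"
        by (simp add: id_times_def yb a_def p_def b_def)
      moreover have "id_times (\<lambda>x. lam c x + d) (yb_map m (id_times (\<lambda>x. lam c x + d) (yb_map m (x, y))))
          = (p', lam c (lam (?i p') u) + d)"
        by (simp add: id_times_def yb u_def p'_def v_def)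
      moreover have "lam (?i p) a = lam c (lam (?i p') u) + d"
      proof -
        have "lam (?i p) a = lam (?i p) (lam x (lam c y)) + lam (?i p) (lam x d)"
          unfolding a_def lam_add ..
        also have "\<dots> = lam (?i p) (lam x (lam c y)) + d"
          using lzd[OF xX] lizd[OF pX] by simp
        also have "lam (?i p) (lam x (lam c y)) = lam c (lam (?i p') u)"
          unfolding u_def pp'[folded pp] using comm[of "?i p" "lam x y"] comm[of x y] by simp
        finally show ?thesis .
      qed
      ultimately show "yb_map m (id_times (\<lambda>x. lam c x + d) (yb_map m (id_times (\<lambda>x. lam c x + d) (x, y)))) =
        id_times (\<lambda>x. lam c x + d) (yb_map m (id_times (\<lambda>x. lam c x + d) (yb_map m (x, y))))"
        using pp pp' by simp
    qed
    show "is_reflection X (yb_map m) (\<lambda>x. m c x + c) \<and>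
        (\<forall>x\<in>X. m c (m c x + c) + c = x)"
      using refl3 inv3 kk by simp
  qed
  have inv1: "m c c \<in> brace_soc m \<Longrightarrow> (\<forall>x\<in>X. m c (m c x - c) - c = x)"
    using P1 by (simp add: lam_def)
  show ?thesis using refl1 inv1 soc0 part3 kl by auto
qed

end
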